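(* Let $G=(V,E)$ be a chordal graph on a non-empty finite vertex set $V$, and let $\{A_v\}_{v\in V}$ be events in a probability space with $\bigcup_{v\in V}A_v\neq\emptyset$. For non-empty $J\subseteq V$ put $B_J:=\bigcap_{i\in J}A_i\cap\bigcap_{i\in V\setminus J}\overline{A_i}$, and let \[ \alpha'(G):=\max\{\,c(G[J]) : J\subseteq V,\ J\neq\emptyset,\ B_J\neq\emptyset\,\}. \] Then for every integer $r\ge1$, \[ \Pr\Big(\bigcup_{v\in V} A_v\Big) \ge \frac{1}{\alpha'(G)} \sum_{\substack{I\in\mathscr{C}(G)\\ |I|\le 2r}} (-1)^{|I|-1}\Pr\Big(\bigcap_{i\in I} A_i\Big) \quad\text{and}\quad \Pr\Big(\bigcup_{v\in V} A_v\Big) \ge \frac{1}{\alpha'(G)} \sum_{I\in\mathscr{C}(G)} (-1)^{|I|-1}\Pr\Big(\bigcap_{i\in I} A_i\Big). \] In particular, if $G[J]$ is connected for every non-empty $J\subseteq V$ with $B_J\neq\emptyset$, then $\Pr\big(\bigcup_{v\in V}A_v\big)=\sum_{I\in\mathscr{C}(G)}(-1)^{|I|-1}\Pr\big(\bigcap_{i\in I}A_i\big)$.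
   Context: A graph is chordal if it contains no cycle of length four or more as an induced subgraph. $\mathscr{C}(G)$ denotes the clique complex of $G$: the set of all non-empty subsets $I\subseteq V$ whose elements are pairwise adjacent in $G$. $G[J]$ is the subgraph induced on $J$, $c(\cdot)$ is the number of connected components, and $\overline{A}$ is the complement of the event $A$. *)

theory Defs
  imports "HOL-Probability.Probability"
begin

definition simple_graph :: "'a set \<Rightarrow> ('a \<Rightarrow> 'a \<Rightarrow> bool) \<Rightarrow> bool" where
  "simple_graph V E \<longleftrightarrow> finite V \<and> (\<forall>x y. E x y \<longrightarrow> x \<in> V \<and> y \<in> V)
     \<and> (\<forall>x y. E x y \<longrightarrow> E y x) \<and> (\<forall>x. \<not> E x x)"

definition induced_cycle :: "'a set \<Rightarrow> ('a \<Rightarrow> 'a \<Rightarrow> bool) \<Rightarrow> 'a list \<Rightarrow> bool" where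
  "induced_cycle V E xs \<longleftrightarrow> length xs \<ge> 3 \<and> distinct xs \<and> set xs \<subseteq> V \<and>
     (\<forall>i < length xs. \<forall>j < length xs.
        E (xs ! i) (xs ! j) \<longleftrightarrow> (j = Suc i mod length xs \<or> i = Suc j mod length xs))"

definition chordal :: "'a set \<Rightarrow> ('a \<Rightarrow> 'a \<Rightarrow> bool) \<Rightarrow> bool" where
  "chordal V E \<longleftrightarrow> \<not> (\<exists>xs. induced_cycle V E xs \<and> length xs \<ge> 4)"

definition conn_rel :: "('a \<Rightarrow> 'a \<Rightarrow> bool) \<Rightarrow> 'a set \<Rightarrow> ('a \<times> 'a) set" where
  "conn_rel E J = {(x, y). x \<in> J \<and> y \<in> J \<and> (\<lambda>u v. u \<in> J \<and> v \<in> J \<and> E u v)\<^sup>*\<^sup>* x y}"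

definition num_components :: "('a \<Rightarrow> 'a \<Rightarrow> bool) \<Rightarrow> 'a set \<Rightarrow> nat" where
  "num_components E J = card (J // conn_rel E J)"

definition clique_complex :: "'a set \<Rightarrow> ('a \<Rightarrow> 'a \<Rightarrow> bool) \<Rightarrow> 'a set set" where
  "clique_complex V E = {I. I \<noteq> {} \<and> I \<subseteq> V \<and> (\<forall>x\<in>I. \<forall>y\<in>I. x \<noteq> y \<longrightarrow> E x y)}"

definition atom :: "'b measure \<Rightarrow> 'a set \<Rightarrow> ('a \<Rightarrow> 'b set) \<Rightarrow> 'a set \<Rightarrow> 'b set" where
  "atom M V A J = space M \<inter> (\<Inter>i\<in>J. A i) \<inter> (\<Inter>i\<in>V - J. space M - A i)"

definition alpha' :: "'b measure \<Rightarrow> 'a set \<Rightarrow> ('a \<Rightarrow> 'a \<Rightarrow> bool) \<Rightarrow> ('a \<Rightarrow> 'b set) \<Rightarrow> nat" where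
  "alpha' M V E A = Max {num_components E J | J. J \<subseteq> V \<and> J \<noteq> {} \<and> atom M V A J \<noteq> {}}"

end

theory Submission
  imports Defs
begin


fun walk :: "('a \<Rightarrow> 'a \<Rightarrow> bool) \<Rightarrow> 'a set \<Rightarrow> 'a list \<Rightarrow> bool" where
  "walk E H [] = False"
| "walk E H [x] = (x \<in> H)"
| "walk E H (x#y#xs) = (x \<in> H \<and> E x y \<and> walk E H (y#xs))"

lemma walk_set: "walk E H xs \<Longrightarrow> set xs \<subseteq> H"
  by (induction E H xs rule: walk.induct) auto

lemma walk_nth: "walk E H xs \<Longrightarrow> Suc i < length xs \<Longrightarrow> E (xs!i) (xs!Suc i)"
proof (induction E H xs arbitrary: i rule: walk.induct)
  case (3 E H x y xs)
  then show ?case by (cases i) auto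
qed auto

lemma walk_take: "walk E H xs \<Longrightarrow> 0 < n \<Longrightarrow> walk E H (take n xs)"
proof (induction E H xs arbitrary: n rule: walk.induct)
  case (3 E H x y xs)
  then show ?case
  proof (cases n)
    case (Suc k)
    then show ?thesis
    proof (cases k)
    case 0 then show ?thesis using Suc 3 by simp
  next
    case (Suc j)
    have "walk E H (take (Suc j) (y # xs))" using "3.IH"[of "Suc j"] "3.prems" by simp
    then show ?thesis using \<open>n = Suc k\<close> Suc 3 by simp
  qed
  qed simp
qed auto

lemma walk_drop: "walk E H xs \<Longrightarrow> n < length xs \<Longrightarrow> walk E H (drop n xs)"
proof (induction E H xs arbitrary: n rule: walk.induct)
  case (3 E H x y xs)
  then show ?case by (cases n) auto
qed auto

lemma walk_append: "walk E H xs \<Longrightarrow> walk E H ys \<Longrightarrow> E (last xs) (hd ys) \<Longrightarrow> walk E H (xs @ ys)"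
proof (induction E H xs rule: walk.induct)
  case (2 E H x)
  then show ?case by (cases ys) auto
qed auto

lemma walk_ne: "walk E H xs \<Longrightarrow> xs \<noteq> []" by auto

lemma last_take_Suc: "i < length xs \<Longrightarrow> last (take (Suc i) xs) = xs ! i"
  by (simp add: take_Suc_conv_app_nth)

lemma walk_rtranclp: "walk E H xs \<Longrightarrow> (\<lambda>u v. u \<in> H \<and> v \<in> H \<and> E u v)\<^sup>*\<^sup>* (hd xs) (last xs)"
proof (induction E H xs rule: walk.induct)
  case (3 E H x y xs)
  then have "y \<in> H" by (cases xs) auto
  with 3 show ?case by (auto intro: converse_rtranclp_into_rtranclp)
qed auto

lemma rtranclp_walk:
  assumes "(\<lambda>u v. u \<in> H \<and> v \<in> H \<and> E u v)\<^sup>*\<^sup>* x y" "x \<in> H"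
  shows "\<exists>xs. walk E H xs \<and> hd xs = x \<and> last xs = y"
  using assms
proof (induction rule: rtranclp_induct)
  case base
  show ?case by (rule exI[where x="[x]"]) (use base in simp)
next
  case (step y z)
  then obtain xs where "walk E H xs" "hd xs = x" "last xs = y" by auto
  moreover have "walk E H [z]" using step by auto
  ultimately have "walk E H (xs @ [z])" using step by (intro walk_append) auto
  then show ?case using \<open>hd xs = x\<close> \<open>walk E H xs\<close> walk_ne[of E H xs] by (intro exI[of _ "xs @ [z]"]) auto
qed

lemma conn_rel_walk: "(x,y) \<in> conn_rel E J \<longleftrightarrow> (\<exists>xs. walk E J xs \<and> hd xs = x \<and> last xs = y)"
proof
  assume "(x,y) \<in> conn_rel E J"
  then show "\<exists>xs. walk E J xs \<and> hd xs = x \<and> last xs = y"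
    unfolding conn_rel_def by (auto intro: rtranclp_walk)
next
  assume "\<exists>xs. walk E J xs \<and> hd xs = x \<and> last xs = y"
  then obtain xs where xs: "walk E J xs" "hd xs = x" "last xs = y" by auto
  then have "x \<in> J" "y \<in> J" using walk_set[OF xs(1)] walk_ne[OF xs(1)] by auto
  then show "(x,y) \<in> conn_rel E J" unfolding conn_rel_def using walk_rtranclp[OF xs(1)] xs by auto
qed

lemma conn_rel_refl: "x \<in> J \<Longrightarrow> (x,x) \<in> conn_rel E J"
  unfolding conn_rel_def by auto

lemma conn_rel_edge: "x \<in> J \<Longrightarrow> y \<in> J \<Longrightarrow> E x y \<Longrightarrow> (x,y) \<in> conn_rel E J"
  unfolding conn_rel_def by auto

lemma conn_rel_trans: "(x,y) \<in> conn_rel E J \<Longrightarrow> (y,z) \<in> conn_rel E J \<Longrightarrow> (x,z) \<in> conn_rel E J"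
  unfolding conn_rel_def by auto

lemma conn_rel_sym:
  assumes "\<And>x y. E x y \<Longrightarrow> E y x" "(x,y) \<in> conn_rel E J"
  shows "(y,x) \<in> conn_rel E J"
proof -
  have s: "symp (\<lambda>u v. u \<in> J \<and> v \<in> J \<and> E u v)" using assms(1) by (auto simp: symp_def)
  show ?thesis using assms(2) sympD[OF symp_rtranclp[OF s]] unfolding conn_rel_def by (auto simp: symp_def)
qed

lemma conn_rel_mono: "J \<subseteq> K \<Longrightarrow> conn_rel E J \<subseteq> conn_rel E K"
  unfolding conn_rel_def
  by (auto elim!: rtranclp_mono[THEN predicate2D, rotated])

lemma conn_rel_sub: "conn_rel E J \<subseteq> J \<times> J" unfolding conn_rel_def by auto

lemma conn_rel_refl_on: "refl_on J (conn_rel E J)" by (rule refl_onI) (erule conn_rel_refl)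
lemma conn_rel_symm: "sym (conn_rel E J)" if "\<And>x y. E x y \<Longrightarrow> E y x"
  apply (rule symI) apply (erule conn_rel_sym[rotated]) apply (erule that) done
lemma conn_rel_transs: "trans (conn_rel E J)" apply (rule transI) apply (erule (1) conn_rel_trans) done
lemma conn_rel_equiv: "equiv J (conn_rel E J)" if "\<And>x y. E x y \<Longrightarrow> E y x"
  using equivI[OF conn_rel_sub conn_rel_refl_on conn_rel_symm[OF that] conn_rel_transs] .

lemma cyc_adj_iff:
  fixes L i j :: nat
  assumes "3 \<le> L" "i < L" "j < L"
  shows "(j = Suc i mod L \<or> i = Suc j mod L) \<longleftrightarrow>
         (j = Suc i \<or> i = Suc j \<or> (i = 0 \<and> j = L - 1) \<or> (j = 0 \<and> i = L - 1))"
proof -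
  have a: "Suc i mod L = (if Suc i = L then 0 else Suc i)" using assms by auto
  have b: "Suc j mod L = (if Suc j = L then 0 else Suc j)" using assms by auto
  show ?thesis unfolding a b using assms by auto
qed

lemma sg_sym:
  assumes "simple_graph V E" "E x y" shows "E y x"
proof -
  have "\<forall>x y. E x y \<longrightarrow> E y x" using assms(1) unfolding simple_graph_def by (elim conjE)
  then have "E x y \<longrightarrow> E y x" by (elim allE)
  then show ?thesis using assms(2) by (rule mp)
qed

lemma sg_irr:
  assumes "simple_graph V E" shows "\<not> E x x"
proof -
  have "\<forall>x. \<not> E x x" using assms(1) unfolding simple_graph_def by (elim conjE)
  then show ?thesis by (rule spec)
qed

lemma sg_fin: "simple_graph V E \<Longrightarrow> finite V"
  unfolding simple_graph_def apply (elim conjE) apply assumption done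

lemma key:
  assumes sg: "simple_graph V E" and ch: "chordal V E" and HV: "H \<subseteq> V" and v: "v \<in> H"
    and ab: "a \<in> {u\<in>H. E v u}" "b \<in> {u\<in>H. E v u}"
    and conn: "(a,b) \<in> conn_rel E (H - {v})"
  shows "(a,b) \<in> conn_rel E {u\<in>H. E v u}"
proof (rule ccontr)
  assume nconn: "(a,b) \<notin> conn_rel E {u\<in>H. E v u}"
  define N where "N = {u\<in>H. E v u}"
  define H' where "H' = H - {v}"
  have sym: "\<And>x y. E x y \<Longrightarrow> E y x" and irr: "\<And>x. \<not> E x x"
    using sg_sym[OF sg] sg_irr[OF sg] by blast+
  define bad where "bad xs \<longleftrightarrow> walk E H' xs \<and> hd xs \<in> N \<and> last xs \<in> N \<and> (hd xs, last xs) \<notin> conn_rel E N" for xs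
  obtain xs0 where "walk E H' xs0" "hd xs0 = a" "last xs0 = b"
    using conn unfolding H'_def conn_rel_walk by auto
  then have "bad xs0" using ab nconn unfolding bad_def N_def by auto
  then obtain xs where bx: "bad xs" and minx: "\<And>ys. bad ys \<Longrightarrow> length xs \<le> length ys"
    using ex_has_least_nat[of bad xs0 length] by blast
  define n where "n = length xs"
  have wx: "walk E H' xs" and hN: "hd xs \<in> N" and lN: "last xs \<in> N"
    and nc: "(hd xs, last xs) \<notin> conn_rel E N" using bx unfolding bad_def by auto
  have setx: "set xs \<subseteq> H'" using walk_set[OF wx] .
  have xne: "xs \<noteq> []" using wx by auto
  have hd0: "hd xs = xs ! 0" using xne by (simp add: hd_conv_nth)
  have lastn: "last xs = xs ! (n - 1)" using xne by (simp add: last_conv_nth n_def)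
  have xin: "\<And>i. i < n \<Longrightarrow> xs ! i \<in> H'" using setx n_def by auto
  have NH: "N \<subseteq> H" unfolding N_def by auto
  have n3: "n \<ge> 3"
  proof (rule ccontr)
    assume "\<not> n \<ge> 3"
    moreover have "n \<noteq> 0" using xne n_def by simp
    ultimately have "n = 1 \<or> n = 2" by linarith
    then show False
    proof
      assume "n = 1"
      then have "hd xs = last xs" using hd0 lastn by simp
      then show False using nc conn_rel_refl[of "hd xs" N E] hN by simp
    next
      assume "n = 2"
      then have "E (xs!0) (xs!1)" using walk_nth[OF wx, of 0] n_def by simp
      then have "E (hd xs) (last xs)" using hd0 lastn \<open>n = 2\<close> by simp
      then show False using nc conn_rel_edge[of "hd xs" N "last xs" E] hN lN by simp
    qed
  qed
  have interior: "xs ! i \<notin> N" if "0 < i" "i < n - 1" for i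
  proof
    assume iN: "xs ! i \<in> N"
    have "(hd xs, xs!i) \<notin> conn_rel E N \<or> (xs!i, last xs) \<notin> conn_rel E N"
    proof (rule ccontr)
      assume "\<not> ((hd xs, xs!i) \<notin> conn_rel E N \<or> (xs!i, last xs) \<notin> conn_rel E N)"
      then have "(hd xs, xs!i) \<in> conn_rel E N" "(xs!i, last xs) \<in> conn_rel E N" by simp_all
      from conn_rel_trans[OF this] nc show False by simp
    qed
    then show False
    proof
      assume c: "(hd xs, xs!i) \<notin> conn_rel E N"
      let ?ys = "take (Suc i) xs"
      have w: "walk E H' ?ys" using walk_take[OF wx, of "Suc i"] by simp
      have l: "last ?ys = xs ! i" using last_take_Suc[of i xs] that n_def by simp
      have "bad ?ys" unfolding bad_def using w l c hN iN by simp
      then have "length xs \<le> Suc i" using minx[of ?ys] by simp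
      then show False using that n_def by simp
    next
      assume c: "(xs!i, last xs) \<notin> conn_rel E N"
      let ?ys = "drop i xs"
      have w: "walk E H' ?ys" using walk_drop[OF wx, of i] that n_def by simp
      have h: "hd ?ys = xs ! i" using hd_drop_conv_nth[of i xs] that n_def by simp
      have l: "last ?ys = last xs" using that n_def by simp
      have "bad ?ys" unfolding bad_def using w h l c lN iN by simp
      then have "length xs \<le> length xs - i" using minx[of ?ys] by simp
      then show False using that n_def by simp
    qed
  qed
  have nochord: "\<not> E (xs ! i) (xs ! j)" if "i < j" "j < n" "j \<noteq> Suc i" for i j
  proof
    assume e: "E (xs ! i) (xs ! j)"
    let ?ys = "take (Suc i) xs @ drop j xs"
    have l1: "last (take (Suc i) xs) = xs ! i" using last_take_Suc[of i xs] that n_def by simp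
    have h1: "hd (drop j xs) = xs ! j" using hd_drop_conv_nth[of j xs] that n_def by simp
    have w: "walk E H' ?ys"
      using walk_append[OF walk_take[OF wx, of "Suc i"] walk_drop[OF wx, of j]] e l1 h1 that n_def
      by simp
    have h: "hd ?ys = hd xs" using xne by simp
    have l: "last ?ys = last xs" using that n_def by simp
    have "bad ?ys" unfolding bad_def using w h l hN lN nc by simp
    then have "length xs \<le> length ?ys" using minx[of ?ys] by simp
    then show False using that n_def by simp
  qed
  have dist: "distinct xs"
  proof (rule ccontr)
    assume "\<not> distinct xs"
    then obtain i0 j0 where ij0: "i0 < n" "j0 < n" "i0 \<noteq> j0" "xs ! i0 = xs ! j0"
      unfolding distinct_conv_nth n_def by blast
    have "\<exists>i j. i < j \<and> j < n \<and> xs ! i = xs ! j"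
    proof (cases "i0 < j0")
      case True then show ?thesis using ij0 by blast
    next
      case False then have "j0 < i0" using ij0 by simp
      then show ?thesis using ij0 by metis
    qed
    then obtain i j where ij: "i < j" "j < n" "xs ! i = xs ! j" by blast
    show False
    proof (cases "i = 0")
      case True
      let ?ys = "drop j xs"
      have w: "walk E H' ?ys" using walk_drop[OF wx, of j] ij n_def by simp
      have h: "hd ?ys = hd xs" using hd_drop_conv_nth[of j xs] ij True hd0 n_def by simp
      have l: "last ?ys = last xs" using ij n_def by simp
      have "bad ?ys" unfolding bad_def using w h l hN lN nc by simp
      then have "length xs \<le> length ?ys" using minx[of ?ys] by simp
      then show False using ij n_def by simp
    next
      case False
      let ?ys = "take i xs @ drop j xs"
      have "E (xs ! (i - 1)) (xs ! i)" using walk_nth[OF wx, of "i - 1"] False ij n_def by simp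
      moreover have l1: "last (take i xs) = xs ! (i - 1)"
        using last_take_Suc[of "i - 1" xs] ij False n_def by simp
      moreover have h1: "hd (drop j xs) = xs ! j" using hd_drop_conv_nth[of j xs] ij n_def by simp
      ultimately have w: "walk E H' ?ys"
        using walk_append[OF walk_take[OF wx, of "i"] walk_drop[OF wx, of j]] ij False n_def
        by simp
      have h: "hd ?ys = hd xs" using False xne by simp
      have l: "last ?ys = last xs" using ij n_def by simp
      have "bad ?ys" unfolding bad_def using w h l hN lN nc by simp
      then have "length xs \<le> length ?ys" using minx[of ?ys] by simp
      then show False using ij n_def by simp
    qed
  qed
  define cyc where "cyc = v # xs"
  have Lc: "length cyc = n + 1" unfolding cyc_def n_def by simp
  have vnot: "v \<notin> set xs" using setx unfolding H'_def by auto
  have adjN: "E v (xs ! j) \<longleftrightarrow> (j = 0 \<or> j = n - 1)" if "j < n" for j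
  proof
    assume "E v (xs ! j)"
    then have "xs ! j \<in> N" using xin[OF that] unfolding N_def H'_def by auto
    then show "j = 0 \<or> j = n - 1" using interior[of j] that by linarith
  next
    assume "j = 0 \<or> j = n - 1"
    then have "xs ! j \<in> N" using hN lN hd0 lastn by auto
    then show "E v (xs ! j)" unfolding N_def by auto
  qed
  have adjxx: "E (xs ! i) (xs ! j) \<longleftrightarrow> (j = Suc i \<or> i = Suc j)" if "i < n" "j < n" for i j
  proof
    assume e: "E (xs ! i) (xs ! j)"
    show "j = Suc i \<or> i = Suc j"
    proof (rule ccontr)
      assume c: "\<not> (j = Suc i \<or> i = Suc j)"
      consider "i < j" | "i = j" | "j < i" by linarith
      then show False
      proof cases
        case 1 then show False using nochord[of i j] e c that by auto
      next
        case 2 then show False using e irr by auto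
      next
        case 3 then show False using nochord[of j i] sym[OF e] c that by auto
      qed
    qed
  next
    assume "j = Suc i \<or> i = Suc j"
    then show "E (xs ! i) (xs ! j)"
    proof
      assume "j = Suc i" then show ?thesis using walk_nth[OF wx, of i] that n_def by simp
    next
      assume "i = Suc j" then show ?thesis using sym[OF walk_nth[OF wx, of j]] that n_def by simp
    qed
  qed
  have ind: "induced_cycle V E cyc"
    unfolding induced_cycle_def
  proof (intro conjI allI impI)
    show "3 \<le> length cyc" using Lc n3 by simp
    show "distinct cyc" unfolding cyc_def using dist vnot by simp
    show "set cyc \<subseteq> V" unfolding cyc_def using setx v HV unfolding H'_def by auto
    fix i j assume ij: "i < length cyc" "j < length cyc"
    have r: "(j = Suc i mod length cyc \<or> i = Suc j mod length cyc) \<longleftrightarrow>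
         (j = Suc i \<or> i = Suc j \<or> (i = 0 \<and> j = n) \<or> (j = 0 \<and> i = n))"
      using cyc_adj_iff[of "length cyc" i j] ij Lc n3 by simp
    have g: "E (cyc ! i) (cyc ! j) \<longleftrightarrow> (j = Suc i \<or> i = Suc j \<or> (i = 0 \<and> j = n) \<or> (j = 0 \<and> i = n))"
    proof (cases i)
      case 0
      show ?thesis
      proof (cases j)
        case 0 then show ?thesis using \<open>i = 0\<close> irr n3 xne unfolding cyc_def by simp
      next
        case (Suc j')
        then have "j' < n" using ij Lc by simp
        then show ?thesis using \<open>i = 0\<close> Suc adjN[of j'] n3 unfolding cyc_def by auto
      qed
    next
      case (Suc i')
      then have i': "i' < n" using ij Lc by simp
      show ?thesis
      proof (cases j)
        case 0
        have "E (xs ! i') v \<longleftrightarrow> E v (xs ! i')" using sym by blast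
        then show ?thesis using 0 Suc adjN[OF i'] n3 unfolding cyc_def by auto
      next
        case (Suc j')
        then have "j' < n" using ij Lc by simp
        then show ?thesis using \<open>i = Suc i'\<close> Suc adjxx[OF i'] unfolding cyc_def by auto
      qed
    qed
    then show "E (cyc ! i) (cyc ! j) \<longleftrightarrow> (j = Suc i mod length cyc \<or> i = Suc j mod length cyc)"
      using r by simp
  qed
  then show False using ch Lc n3 unfolding chordal_def by auto
qed



lemma path_through_v:
  assumes sym: "\<And>x y. E x y \<Longrightarrow> E y x"
    and xy: "(x,y) \<in> conn_rel E H" and xv: "x \<noteq> v"
  shows "(y \<noteq> v \<and> (x,y) \<in> conn_rel E (H - {v})) \<or> (\<exists>a\<in>{u\<in>H. E v u}. (x,a) \<in> conn_rel E (H - {v}))"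
proof -
  have xH: "x \<in> H" and rt: "(\<lambda>u w. u \<in> H \<and> w \<in> H \<and> E u w)\<^sup>*\<^sup>* x y"
    using xy unfolding conn_rel_def by auto
  from rt show ?thesis
  proof (induction rule: rtranclp_induct)
    case base
    then show ?case using xH xv conn_rel_refl[of x "H - {v}" E] by auto
  next
    case (step y z)
    from step.IH show ?case
    proof
      assume a: "y \<noteq> v \<and> (x, y) \<in> conn_rel E (H - {v})"
      show ?thesis
      proof (cases "z = v")
        case True
        then have "E y v" using step(2) by simp
        then have "E v y" by (rule sym)
        then have "y \<in> {u\<in>H. E v u}" using step(2) by simp
        then show ?thesis using a by blast
      next
        case False
        then have "(y,z) \<in> conn_rel E (H - {v})" using step(2) a conn_rel_edge[of y "H - {v}" z E] by auto
        then have "(x,z) \<in> conn_rel E (H - {v})" using a conn_rel_trans[of x y] by blast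
        then show ?thesis using False by simp
      qed
    qed auto
  qed
qed

lemma components_rec:
  assumes sg: "simple_graph V E" and ch: "chordal V E" and HV: "H \<subseteq> V" and v: "v \<in> H"
  shows "real (num_components E H) + real (num_components E {u\<in>H. E v u})
       = real (num_components E (H - {v})) + 1"
proof -
  have sym: "\<And>x y. E x y \<Longrightarrow> E y x" and irr: "\<And>x. \<not> E x x" and finV: "finite V"
    using sg_sym[OF sg] sg_irr[OF sg] sg_fin[OF sg] by blast+
  define N where "N = {u\<in>H. E v u}"
  define H' where "H' = H - {v}"
  define R where "R = conn_rel E H"
  define R' where "R' = conn_rel E H'"
  define RN where "RN = conn_rel E N"
  have finH: "finite H" using finV HV finite_subset by auto
  have finH': "finite H'" using finH unfolding H'_def by auto
  have finN: "finite N" using finH unfolding N_def by auto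
  have eqR: "equiv H R" and eqR': "equiv H' R'" and eqRN: "equiv N RN"
    unfolding R_def R'_def RN_def by (auto intro: conn_rel_equiv[OF sym])
  have vN: "v \<notin> N" using irr unfolding N_def by auto
  have reflR: "\<And>x. x \<in> H \<Longrightarrow> (x,x) \<in> R" unfolding R_def by (rule conn_rel_refl)
  have reflR': "\<And>x. x \<in> H' \<Longrightarrow> (x,x) \<in> R'" unfolding R'_def by (rule conn_rel_refl)
  have reflRN: "\<And>x. x \<in> N \<Longrightarrow> (x,x) \<in> RN" unfolding RN_def by (rule conn_rel_refl)
  have transR: "\<And>x y z. (x,y) \<in> R \<Longrightarrow> (y,z) \<in> R \<Longrightarrow> (x,z) \<in> R" unfolding R_def by (rule conn_rel_trans)
  have transR': "\<And>x y z. (x,y) \<in> R' \<Longrightarrow> (y,z) \<in> R' \<Longrightarrow> (x,z) \<in> R'" unfolding R'_def by (rule conn_rel_trans)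
  have symR: "\<And>x y. (x,y) \<in> R \<Longrightarrow> (y,x) \<in> R" unfolding R_def by (rule conn_rel_sym[OF sym])
  have NH': "N \<subseteq> H'" using vN unfolding N_def H'_def by auto
  have R'R: "R' \<subseteq> R" unfolding R'_def R_def H'_def using conn_rel_mono[of "H - {v}" H E] by auto
  have RNR': "RN \<subseteq> R'" unfolding R'_def RN_def using conn_rel_mono[OF NH'] .
  have vR: "(v,a) \<in> R" if "a \<in> N" for a
    using that v conn_rel_edge[of v H a E] unfolding N_def R_def by auto
  define Q0 where "Q0 = {C \<in> H' // R'. C \<inter> N = {}}"
  define Q1 where "Q1 = {C \<in> H' // R'. C \<inter> N \<noteq> {}}"
  have HQ: "H // R = insert (R `` {v}) Q0"
  proof (intro equalityI subsetI)
    fix D assume "D \<in> H // R"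
    then obtain x where x: "x \<in> H" "D = R `` {x}" unfolding quotient_def by auto
    show "D \<in> insert (R `` {v}) Q0"
    proof (cases "(x,v) \<in> R")
      case True
      then have "D = R `` {v}" using x equiv_class_eq[OF eqR True] by simp
      then show ?thesis by simp
    next
      case False
      then have xv: "x \<noteq> v" using x reflR by auto
      then have xH': "x \<in> H'" using x unfolding H'_def by auto
      have noN: "R' `` {x} \<inter> N = {}"
      proof (rule ccontr)
        assume "R' `` {x} \<inter> N \<noteq> {}"
        then obtain a where "a \<in> N" "(x,a) \<in> R'" by auto
        then have "(x,a) \<in> R" "(a,v) \<in> R" using R'R symR[OF vR] by auto
        then show False using False transR[of x a v] by simp
      qed
      have "D = R' `` {x}"
      proof (intro equalityI subsetI)
        fix y assume "y \<in> D"
        then have "(x,y) \<in> R" using x by auto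
        then have "(y \<noteq> v \<and> (x,y) \<in> R') \<or> (\<exists>a\<in>N. (x,a) \<in> R')"
          using path_through_v[where E=E and x=x and y=y and H=H and v=v, OF sym] xv unfolding R_def R'_def N_def H'_def by auto
        then show "y \<in> R' `` {x}" using noN by auto
      next
        fix y assume "y \<in> R' `` {x}"
        then show "y \<in> D" using x R'R by auto
      qed
      then have "D \<in> Q0" unfolding Q0_def using xH' noN by (auto simp: quotient_def)
      then show ?thesis by simp
    qed
  next
    fix D assume D: "D \<in> insert (R `` {v}) Q0"
    show "D \<in> H // R"
    proof (cases "D = R `` {v}")
      case True then show ?thesis using v by (auto simp: quotient_def)
    next
      case False
      then have "D \<in> Q0" using D by simp
      then obtain x where x: "x \<in> H'" "D = R' `` {x}" and noN: "D \<inter> N = {}"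
        unfolding Q0_def quotient_def by auto
      have xv: "x \<noteq> v" using x unfolding H'_def by auto
      have "D = R `` {x}"
      proof (intro equalityI subsetI)
        fix y assume "y \<in> R `` {x}"
        then have "(x,y) \<in> R" by auto
        then have "(y \<noteq> v \<and> (x,y) \<in> R') \<or> (\<exists>a\<in>N. (x,a) \<in> R')"
          using path_through_v[where E=E and x=x and y=y and H=H and v=v, OF sym] xv unfolding R_def R'_def N_def H'_def by auto
        then show "y \<in> D" using noN x by auto
      next
        fix y assume "y \<in> D" then show "y \<in> R `` {x}" using x R'R by auto
      qed
      then show ?thesis using x unfolding H'_def by (auto simp: quotient_def)
    qed
  qed
  have vQ0: "R `` {v} \<notin> Q0"
  proof
    assume "R `` {v} \<in> Q0"
    then have "R `` {v} \<subseteq> H'" unfolding Q0_def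
      using eqR' by (auto dest: equiv_type elim!: quotientE)
    moreover have "v \<in> R `` {v}" using v reflR by auto
    ultimately show False unfolding H'_def by auto
  qed
  have finQ': "finite (H' // R')" using finite_quotient[OF finH'] eqR' by (auto dest: equiv_type)
  have finQ0: "finite Q0" using finQ' unfolding Q0_def by auto
  have cardH: "card (H // R) = card Q0 + 1" using HQ vQ0 finQ0 by simp
  have cardH': "card (H' // R') = card Q0 + card Q1"
  proof -
    have "H' // R' = Q0 \<union> Q1" "Q0 \<inter> Q1 = {}" unfolding Q0_def Q1_def by auto
    moreover have "finite Q1" using finQ' unfolding Q1_def by auto
    ultimately show ?thesis using finQ0 card_Un_disjoint by metis
  qed
  \<comment> \<open>bijection between N-components and touched H'-components\<close>
  have img: "R' `` (RN `` {a}) = R' `` {a}" if "a \<in> N" for a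
  proof (intro equalityI subsetI)
    fix y assume "y \<in> R' `` (RN `` {a})"
    then obtain d where "(a,d) \<in> RN" "(d,y) \<in> R'" by auto
    then have "(a,d) \<in> R'" "(d,y) \<in> R'" using RNR' by auto
    then show "y \<in> R' `` {a}" using transR'[of a d y] by simp
  next
    fix y assume "y \<in> R' `` {a}"
    moreover have "(a,a) \<in> RN" using that reflRN by auto
    ultimately show "y \<in> R' `` (RN `` {a})" by auto
  qed
  have cardQ1: "card Q1 = card (N // RN)"
  proof -
    have inj: "inj_on (\<lambda>D. R' `` D) (N // RN)"
    proof (rule inj_onI)
      fix D1 D2 assume D1: "D1 \<in> N // RN" and D2: "D2 \<in> N // RN" and eq: "R' `` D1 = R' `` D2"
      obtain a where a: "a \<in> N" "D1 = RN `` {a}" using D1 unfolding quotient_def by auto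
      obtain b where b: "b \<in> N" "D2 = RN `` {b}" using D2 unfolding quotient_def by auto
      have "R' `` {a} = R' `` {b}" using eq img a b by simp
      moreover have "(b,b) \<in> R'" using b NH' reflR' by auto
      ultimately have "(a,b) \<in> R'" by auto
      then have "(a,b) \<in> RN"
        using key[OF sg ch HV v, of a b] a b unfolding R'_def RN_def N_def H'_def by auto
      then show "D1 = D2" using a b equiv_class_eq[OF eqRN] by simp
    qed
    have im: "(\<lambda>D. R' `` D) ` (N // RN) = Q1"
    proof (intro equalityI subsetI)
      fix C assume "C \<in> (\<lambda>D. R' `` D) ` (N // RN)"
      then obtain a where a: "a \<in> N" "C = R' `` {a}" using img unfolding quotient_def by auto
      have "a \<in> C" using a NH' reflR' by auto
      then show "C \<in> Q1" using a NH' unfolding Q1_def quotient_def by auto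
    next
      fix C assume "C \<in> Q1"
      then obtain x a where x: "x \<in> H'" "C = R' `` {x}" and a: "a \<in> C" "a \<in> N"
        unfolding Q1_def quotient_def by auto
      have "(x,a) \<in> R'" using x a by auto
      then have "C = R' `` {a}" using x equiv_class_eq[OF eqR'] by simp
      then have "C = R' `` (RN `` {a})" using img a by simp
      then show "C \<in> (\<lambda>D. R' `` D) ` (N // RN)" using a by (auto simp: quotient_def)
    qed
    show ?thesis using card_image[OF inj] im by simp
  qed
  show ?thesis
    unfolding num_components_def
    using cardH cardH' cardQ1 unfolding R_def R'_def RN_def N_def H'_def by simp
qed



definition Ssum :: "('a \<Rightarrow> 'a \<Rightarrow> bool) \<Rightarrow> nat \<Rightarrow> 'a set \<Rightarrow> real" where
  "Ssum E m H = (\<Sum>I\<in>clique_complex H E. if card I \<le> m then (-1) ^ (card I - 1) else 0)"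

lemma finite_cc: "finite H \<Longrightarrow> finite (clique_complex H E)"
  by (rule finite_subset[of _ "Pow H"]) (auto simp: clique_complex_def)

lemma cc_card: "finite H \<Longrightarrow> I \<in> clique_complex H E \<Longrightarrow> 1 \<le> card I \<and> card I \<le> card H"
  unfolding clique_complex_def
  by (auto simp: card_mono finite_subset Suc_le_eq card_gt_0_iff)

lemma cc_rec:
  assumes sym: "\<And>x y. E x y \<Longrightarrow> E y x" and v: "v \<in> H"
  shows "clique_complex H E = clique_complex (H - {v}) E \<union> insert v ` ({{}} \<union> clique_complex {u\<in>H. E v u} E)"
proof (intro equalityI subsetI)
  fix I assume I: "I \<in> clique_complex H E"
  show "I \<in> clique_complex (H - {v}) E \<union> insert v ` ({{}} \<union> clique_complex {u\<in>H. E v u} E)"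
  proof (cases "v \<in> I")
    case False
    then show ?thesis using I unfolding clique_complex_def by auto
  next
    case True
    then have "I = insert v (I - {v})" by auto
    moreover have "I - {v} \<in> {{}} \<union> clique_complex {u\<in>H. E v u} E"
      using I True unfolding clique_complex_def by auto
    ultimately show ?thesis by blast
  qed
next
  fix I assume "I \<in> clique_complex (H - {v}) E \<union> insert v ` ({{}} \<union> clique_complex {u\<in>H. E v u} E)"
  then show "I \<in> clique_complex H E"
  proof
    assume "I \<in> clique_complex (H - {v}) E" then show ?thesis unfolding clique_complex_def by auto
  next
    assume "I \<in> insert v ` ({{}} \<union> clique_complex {u\<in>H. E v u} E)"
    then obtain T where T: "I = insert v T" "T = {} \<or> T \<in> clique_complex {u\<in>H. E v u} E" by auto
    have TN: "\<forall>x\<in>T. x \<in> H \<and> E v x" using T(2) unfolding clique_complex_def by auto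
    have TT: "\<forall>x\<in>T. \<forall>y\<in>T. x \<noteq> y \<longrightarrow> E x y" using T(2) unfolding clique_complex_def by auto
    have "\<forall>x\<in>I. \<forall>y\<in>I. x \<noteq> y \<longrightarrow> E x y"
    proof (intro ballI impI)
      fix x y assume "x \<in> I" "y \<in> I" "x \<noteq> y"
      then consider "x = v" "y \<in> T" | "y = v" "x \<in> T" | "x \<in> T" "y \<in> T" using T(1) by auto
      then show "E x y"
      proof cases
        case 1 then show ?thesis using TN by simp
      next
        case 2 then show ?thesis using TN sym by blast
      next
        case 3 then show ?thesis using TT \<open>x \<noteq> y\<close> by blast
      qed
    qed
    then show ?thesis using T(1) TN v unfolding clique_complex_def by auto
  qed
qed

lemma Ssum_rec:
  assumes sym: "\<And>x y. E x y \<Longrightarrow> E y x" and irr: "\<And>x. \<not> E x x" and v: "v \<in> H" and fin: "finite H"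
  shows "Ssum E (Suc m) H = Ssum E (Suc m) (H - {v}) + 1 - Ssum E m {u\<in>H. E v u}"
proof -
  define N where "N = {u\<in>H. E v u}"
  define f where "f I = (if card I \<le> Suc m then (-1::real) ^ (card I - 1) else 0)" for I :: "'a set"
  have finN: "finite N" using fin unfolding N_def by auto
  have vN: "v \<notin> N" using irr unfolding N_def by auto
  have disj: "clique_complex (H - {v}) E \<inter> insert v ` ({{}} \<union> clique_complex N E) = {}"
    unfolding clique_complex_def by auto
  have fin1: "finite (clique_complex (H - {v}) E)" using finite_cc[of "H - {v}" E] fin by auto
  have fin2: "finite (insert v ` ({{}} \<union> clique_complex N E))" using finN finite_cc by auto
  have inj: "inj_on (insert v) ({{}} \<union> clique_complex N E)"
  proof (rule inj_onI)
    fix A B assume "A \<in> {{}} \<union> clique_complex N E" "B \<in> {{}} \<union> clique_complex N E" "insert v A = insert v B"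
    moreover have "v \<notin> A" "v \<notin> B" using calculation vN unfolding clique_complex_def by auto
    ultimately show "A = B" by (metis insert_ident)
  qed
  have e0: "{} \<notin> clique_complex N E" unfolding clique_complex_def by auto
  have "Ssum E (Suc m) H = sum f (clique_complex H E)" unfolding Ssum_def f_def by simp
  also have "\<dots> = sum f (clique_complex (H - {v}) E) + sum f (insert v ` ({{}} \<union> clique_complex N E))"
    using cc_rec[where E=E and v=v and H=H, OF sym v] sum.union_disjoint[OF fin1 fin2 disj] unfolding N_def by simp
  also have "sum f (insert v ` ({{}} \<union> clique_complex N E)) = sum (f \<circ> insert v) ({{}} \<union> clique_complex N E)"
    using sum.reindex[OF inj] by simp
  also have "\<dots> = f {v} + sum (f \<circ> insert v) (clique_complex N E)"
    using e0 finite_cc[OF finN] by simp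
  also have "f {v} = 1" unfolding f_def by simp
  also have "sum (f \<circ> insert v) (clique_complex N E) = - Ssum E m N"
  proof -
    have "(f \<circ> insert v) T = - (if card T \<le> m then (-1) ^ (card T - 1) else 0)"
      if T: "T \<in> clique_complex N E" for T
    proof -
      have c1: "1 \<le> card T" using cc_card[OF finN T] by simp
      have fT: "finite T" using card_ge_0_finite[of T] c1 by simp
      have vT: "v \<notin> T" using T vN unfolding clique_complex_def by auto
      have ci: "card (insert v T) = Suc (card T)" using fT vT by simp
      have "(-1::real) ^ card T = - ((-1) ^ (card T - 1))"
        using c1 by (metis Suc_diff_1 less_le_trans less_numeral_extra(1) mult_minus1 power_Suc)
      then show ?thesis unfolding f_def comp_def ci by simp
    qed
    then have "sum (f \<circ> insert v) (clique_complex N E)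
        = sum (\<lambda>T. - (if card T \<le> m then (-1::real) ^ (card T - 1) else 0)) (clique_complex N E)"
      by (rule sum.cong[OF refl])
    also have "\<dots> = - Ssum E m N" unfolding Ssum_def by (simp add: sum_negf)
    finally show ?thesis .
  qed
  also have "sum f (clique_complex (H - {v}) E) = Ssum E (Suc m) (H - {v})" unfolding Ssum_def f_def by simp
  finally show ?thesis unfolding N_def by simp
qed

lemma Ssum_empty: "Ssum E m {} = 0"
  unfolding Ssum_def clique_complex_def by simp

lemma Ssum_0: "finite H \<Longrightarrow> Ssum E 0 H = 0"
  unfolding Ssum_def using cc_card[of H _ E] by (intro sum.neutral) fastforce

lemma bonf:
  assumes sg: "simple_graph V E" and ch: "chordal V E"
  shows "H \<subseteq> V \<Longrightarrow> (even m \<longrightarrow> Ssum E m H \<le> real (num_components E H)) \<and>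
                    (odd m \<longrightarrow> Ssum E m H \<ge> real (num_components E H))"
proof (induction "card H" arbitrary: H m rule: less_induct)
  case less
  have sym: "\<And>x y. E x y \<Longrightarrow> E y x" and irr: "\<And>x. \<not> E x x" and finV: "finite V"
    using sg_sym[OF sg] sg_irr[OF sg] sg_fin[OF sg] by blast+
  have finH: "finite H" using less.prems finV finite_subset by auto
  show ?case
  proof (cases "H = {}")
    case True
    then show ?thesis unfolding num_components_def by (simp add: Ssum_empty)
  next
    case False
    then obtain v where v: "v \<in> H" by auto
    show ?thesis
    proof (cases m)
      case 0
      then show ?thesis using Ssum_0[OF finH] by simp
    next
      case (Suc m')
      define N where "N = {u\<in>H. E v u}"
      have NH: "N \<subseteq> H - {v}" using irr unfolding N_def by auto
      have "card H > 0" using v finH card_gt_0_iff by blast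
      then have cH': "card (H - {v}) < card H" using v finH by simp
      have cN: "card N < card H" using card_mono[OF _ NH] finH cH' by simp
      have IH1: "(even m \<longrightarrow> Ssum E m (H - {v}) \<le> real (num_components E (H - {v}))) \<and>
                 (odd m \<longrightarrow> Ssum E m (H - {v}) \<ge> real (num_components E (H - {v})))"
        using less.hyps[OF cH'] less.prems by auto
      have IH2: "(even m' \<longrightarrow> Ssum E m' N \<le> real (num_components E N)) \<and>
                 (odd m' \<longrightarrow> Ssum E m' N \<ge> real (num_components E N))"
        using less.hyps[OF cN] less.prems NH by auto
      have r1: "Ssum E m H = Ssum E m (H - {v}) + 1 - Ssum E m' N"
        using Ssum_rec[where E=E and v=v and H=H and m=m', OF sym irr v finH] Suc unfolding N_def by simp
      have r2: "real (num_components E H) + real (num_components E N) = real (num_components E (H - {v})) + 1"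
        using components_rec[OF sg ch less.prems v] unfolding N_def by simp
      show ?thesis using IH1 IH2 r1 r2 Suc by auto
    qed
  qed
qed

lemma Ssum_exact:
  assumes sg: "simple_graph V E" and ch: "chordal V E" and HV: "H \<subseteq> V" and m: "card H \<le> m"
  shows "Ssum E m H = real (num_components E H)"
proof -
  have finH: "finite H" using sg_fin[OF sg] HV finite_subset by auto
  have "Ssum E m H = Ssum E (Suc m) H"
    unfolding Ssum_def using cc_card[OF finH] m by (intro sum.cong) fastforce+
  then show ?thesis using bonf[OF sg ch HV, of m] bonf[OF sg ch HV, of "Suc m"] by auto
qed



lemma num_components_empty: "num_components E {} = 0"
  unfolding num_components_def quotient_def by simp

lemma pointwise_sum:
  fixes A :: "'a \<Rightarrow> 'b set"
  assumes JV: "J = {v\<in>V. w \<in> A v}" and finV: "finite V"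
  shows "(\<Sum>I\<in>{I \<in> clique_complex V E. card I \<le> m}. (-1) ^ (card I - 1) * indicator (\<Inter>i\<in>I. A i) w)
       = Ssum E m J"
proof -
  have ind: "indicator (\<Inter>i\<in>I. A i) w = (if I \<subseteq> J then 1 else (0::real))"
    if "I \<in> {I \<in> clique_complex V E. card I \<le> m}" for I
    using that JV unfolding clique_complex_def by (auto simp: indicator_def)
  have fin: "finite {I \<in> clique_complex V E. card I \<le> m}" if "finite V"
    using finite_cc[OF that] by auto
  have "(\<Sum>I\<in>{I \<in> clique_complex V E. card I \<le> m}. (-1) ^ (card I - 1) * indicator (\<Inter>i\<in>I. A i) w)
      = (\<Sum>I\<in>{I \<in> clique_complex V E. card I \<le> m}. if I \<subseteq> J then (-1::real) ^ (card I - 1) else 0)"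
    by (rule sum.cong[OF refl]) (simp add: ind)
  also have "\<dots> = (\<Sum>I\<in>clique_complex J E. if card I \<le> m then (-1::real) ^ (card I - 1) else 0)"
  proof -
    have "(\<Sum>I\<in>{I \<in> clique_complex V E. card I \<le> m}. if I \<subseteq> J then (-1::real) ^ (card I - 1) else 0)
        = (\<Sum>I\<in>{I \<in> clique_complex V E. card I \<le> m \<and> I \<subseteq> J}. (-1::real) ^ (card I - 1))"
      by (rule sum.mono_neutral_cong_right) (use fin[OF finV] in auto)
    also have "{I \<in> clique_complex V E. card I \<le> m \<and> I \<subseteq> J} = {I \<in> clique_complex J E. card I \<le> m}"
      using JV unfolding clique_complex_def by auto
    also have "(\<Sum>I\<in>{I \<in> clique_complex J E. card I \<le> m}. (-1::real) ^ (card I - 1))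
        = (\<Sum>I\<in>clique_complex J E. if card I \<le> m then (-1::real) ^ (card I - 1) else 0)"
      by (rule sum.mono_neutral_cong_left) (use finite_cc[of J E] finV JV in auto)
    finally show ?thesis .
  qed
  finally show ?thesis unfolding Ssum_def .
qed

theorem mainTheorem4:
  fixes M :: "'b measure" and V :: "'a set" and E :: "'a \<Rightarrow> 'a \<Rightarrow> bool"
    and A :: "'a \<Rightarrow> 'b set"
  assumes "prob_space M"
    and "simple_graph V E" and "chordal V E" and "V \<noteq> {}"
    and "\<And>v. v \<in> V \<Longrightarrow> A v \<in> sets M"
    and "(\<Union>v\<in>V. A v) \<noteq> {}"
  shows "(\<forall>r::nat. r \<ge> 1 \<longrightarrow>
           measure M (\<Union>v\<in>V. A v) \<ge> 1 / real (alpha' M V E A) *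
             (\<Sum>I\<in>{I \<in> clique_complex V E. card I \<le> 2 * r}.
                (-1) ^ (card I - 1) * measure M (\<Inter>i\<in>I. A i)))
       \<and> measure M (\<Union>v\<in>V. A v) \<ge> 1 / real (alpha' M V E A) *
             (\<Sum>I\<in>clique_complex V E. (-1) ^ (card I - 1) * measure M (\<Inter>i\<in>I. A i))
       \<and> ((\<forall>J. J \<subseteq> V \<and> J \<noteq> {} \<and> atom M V A J \<noteq> {} \<longrightarrow> num_components E J = 1) \<longrightarrow>
           measure M (\<Union>v\<in>V. A v) =
             (\<Sum>I\<in>clique_complex V E. (-1) ^ (card I - 1) * measure M (\<Inter>i\<in>I. A i)))"
proof -
  interpret prob_space M by (rule assms(1))
  have sg: "simple_graph V E" and ch: "chordal V E" using assms(2,3) .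
  have finV: "finite V" by (rule sg_fin[OF sg])
  define U where "U = (\<Union>v\<in>V. A v)"
  define a where "a = real (alpha' M V E A)"
  define F where "F m = {I \<in> clique_complex V E. card I \<le> m}" for m
  define f where "f m w = (\<Sum>I\<in>F m. (-1::real) ^ (card I - 1) * indicator (\<Inter>i\<in>I. A i) w)" for m w
  have U: "U \<in> sets M" unfolding U_def using assms(5) finV by auto
  have Iset: "(\<Inter>i\<in>I. A i) \<in> sets M" if "I \<in> clique_complex V E" for I
  proof -
    have "finite I" "I \<noteq> {}" "I \<subseteq> V" using that finV finite_subset unfolding clique_complex_def by auto
    then show ?thesis using assms(5) by (intro sets.finite_INT) auto
  qed
  have finF: "finite (F m)" for m using finite_cc[OF finV, of E] unfolding F_def by auto
  have intind: "integrable M (indicator X :: 'b \<Rightarrow> real)" if "X \<in> sets M" for X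
    using that by (intro integrable_real_indicator) (auto simp: less_top[symmetric])
  have intf: "integrable M (f m)" for m
    unfolding f_def
    apply (rule Bochner_Integration.integrable_sum)
    using Iset intind by (auto simp: F_def)
  have Tf: "(\<Sum>I\<in>F m. (-1) ^ (card I - 1) * measure M (\<Inter>i\<in>I. A i)) = integral\<^sup>L M (f m)" for m
  proof -
    have "integral\<^sup>L M (f m) = (\<Sum>I\<in>F m. integral\<^sup>L M (\<lambda>w. (-1::real) ^ (card I - 1) * indicator (\<Inter>i\<in>I. A i) w))"
      unfolding f_def
      by (rule Bochner_Integration.integral_sum) (use intf[unfolded f_def] in \<open>auto simp: F_def Iset intind\<close>)
    also have "\<dots> = (\<Sum>I\<in>F m. (-1) ^ (card I - 1) * measure M (\<Inter>i\<in>I. A i))"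
    proof (rule sum.cong[OF refl])
      fix I assume "I \<in> F m"
      then have "(\<Inter>i\<in>I. A i) \<in> sets M" using Iset unfolding F_def by auto
      then show "integral\<^sup>L M (\<lambda>w. (-1::real) ^ (card I - 1) * indicator (\<Inter>i\<in>I. A i) w)
          = (-1) ^ (card I - 1) * measure M (\<Inter>i\<in>I. A i)"
        by (simp add: sets.Int_space_eq2)
    qed
    finally show ?thesis by simp
  qed
  have fS: "f m w = Ssum E m {v\<in>V. w \<in> A v}" for m w
    unfolding f_def F_def by (rule pointwise_sum) (simp_all add: finV)
  have finC: "finite {num_components E J |J. J \<subseteq> V \<and> J \<noteq> {} \<and> atom M V A J \<noteq> {}}"
    by (rule finite_subset[of _ "num_components E ` Pow V"]) (auto simp: finV)
  have cbound: "real (num_components E {v\<in>V. w \<in> A v}) \<le> a * indicator U w" if w: "w \<in> space M" for w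
  proof (cases "w \<in> U")
    case True
    define J where "J = {v\<in>V. w \<in> A v}"
    have "J \<noteq> {}" using True unfolding U_def J_def by auto
    moreover have "w \<in> atom M V A J" using w unfolding atom_def J_def by auto
    ultimately have "num_components E J \<in> {num_components E J |J. J \<subseteq> V \<and> J \<noteq> {} \<and> atom M V A J \<noteq> {}}"
      unfolding J_def by auto
    then have "num_components E J \<le> alpha' M V E A" unfolding alpha'_def using finC by (rule Max_ge[rotated])
    then show ?thesis using True unfolding a_def J_def by simp
  next
    case False
    then have e: "{v\<in>V. w \<in> A v} = {}" unfolding U_def by auto
    show ?thesis unfolding e using False by (simp add: num_components_empty)
  qed
  have bound: "integral\<^sup>L M (f m) \<le> a * measure M U" if "even m" for m
  proof -
    have "integral\<^sup>L M (f m) \<le> integral\<^sup>L M (\<lambda>w. a * indicator U w)"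
    proof (rule integral_mono[OF intf])
      show "integrable M (\<lambda>w. a * indicator U w)" using intind[OF U] by simp
      fix w assume w: "w \<in> space M"
      have "f m w \<le> real (num_components E {v\<in>V. w \<in> A v})"
        unfolding fS using bonf[OF sg ch, of "{v\<in>V. w \<in> A v}" m] that by auto
      then show "f m w \<le> a * indicator U w" using cbound[OF w] by linarith
    qed
    also have "\<dots> = a * measure M U" using U by (simp add: sets.Int_space_eq2)
    finally show ?thesis .
  qed
  have a0: "a \<ge> 0" unfolding a_def by simp
  have div: "1 / a * T \<le> measure M U" if "T \<le> a * measure M U" for T
  proof (cases "a = 0")
    case True then show ?thesis by simp
  next
    case False
    then have "a > 0" using a0 by simp
    then show ?thesis using that by (simp add: field_simps)
  qed
  have FV: "F (2 * card V) = clique_complex V E"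
    unfolding F_def using cc_card[OF finV, of _ E] by fastforce
  have P1: "\<forall>r::nat. r \<ge> 1 \<longrightarrow>
           measure M (\<Union>v\<in>V. A v) \<ge> 1 / real (alpha' M V E A) *
             (\<Sum>I\<in>{I \<in> clique_complex V E. card I \<le> 2 * r}.
                (-1) ^ (card I - 1) * measure M (\<Inter>i\<in>I. A i))"
  proof (intro allI impI)
    fix r :: nat assume "r \<ge> 1"
    have "(\<Sum>I\<in>F (2*r). (-1) ^ (card I - 1) * measure M (\<Inter>i\<in>I. A i)) \<le> a * measure M U"
      unfolding Tf using bound[of "2*r"] by simp
    from div[OF this] show "measure M (\<Union>v\<in>V. A v) \<ge> 1 / real (alpha' M V E A) *
             (\<Sum>I\<in>{I \<in> clique_complex V E. card I \<le> 2 * r}.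
                (-1) ^ (card I - 1) * measure M (\<Inter>i\<in>I. A i))"
      unfolding F_def a_def U_def .
  qed
  have P2: "measure M (\<Union>v\<in>V. A v) \<ge> 1 / real (alpha' M V E A) *
             (\<Sum>I\<in>clique_complex V E. (-1) ^ (card I - 1) * measure M (\<Inter>i\<in>I. A i))"
  proof -
    have "(\<Sum>I\<in>F (2*card V). (-1) ^ (card I - 1) * measure M (\<Inter>i\<in>I. A i)) \<le> a * measure M U"
      unfolding Tf using bound[of "2*card V"] by simp
    from div[OF this] show ?thesis unfolding FV a_def U_def .
  qed
  have P3: "measure M (\<Union>v\<in>V. A v) =
             (\<Sum>I\<in>clique_complex V E. (-1) ^ (card I - 1) * measure M (\<Inter>i\<in>I. A i))"
    if conn: "\<forall>J. J \<subseteq> V \<and> J \<noteq> {} \<and> atom M V A J \<noteq> {} \<longrightarrow> num_components E J = 1"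
  proof -
    have eq: "f (2 * card V) w = indicator U w" if w: "w \<in> space M" for w
    proof -
      define J where "J = {v\<in>V. w \<in> A v}"
      have JV: "J \<subseteq> V" unfolding J_def by auto
      have "card J \<le> 2 * card V" using card_mono[OF finV JV] by simp
      then have "f (2 * card V) w = real (num_components E J)"
        unfolding fS J_def[symmetric] using Ssum_exact[OF sg ch JV] by simp
      also have "\<dots> = indicator U w"
      proof (cases "w \<in> U")
        case True
        have "J \<noteq> {}" using True unfolding U_def J_def by auto
        moreover have "w \<in> atom M V A J" using w unfolding atom_def J_def by auto
        ultimately have "num_components E J = 1" using conn JV by auto
        then show ?thesis using True by simp
      next
        case False
        then have e: "J = {}" unfolding U_def J_def by auto
        show ?thesis unfolding e using False by (simp add: num_components_empty)
      qed
      finally show ?thesis .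
    qed
    have "(\<Sum>I\<in>clique_complex V E. (-1) ^ (card I - 1) * measure M (\<Inter>i\<in>I. A i))
        = integral\<^sup>L M (f (2 * card V))" using Tf[of "2 * card V"] unfolding FV .
    also have "\<dots> = integral\<^sup>L M (indicator U :: 'b \<Rightarrow> real)" by (rule Bochner_Integration.integral_cong[OF refl eq])
    also have "\<dots> = measure M U" using U by (simp add: sets.Int_space_eq2)
    finally show ?thesis unfolding U_def by simp
  qed
  show ?thesis using P1 P2 P3 by blast
qed

end
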